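(* Let $\mathbf M$ be an $(N+1,k)$-admissible matrix with characteristic triple $(\mu,\widetilde{\mathbf w},\widetilde{\mathbf z})$, let $h\in(0,1]$ and $\mathbf M^{(h)}:=\mathbf I+h(\mathbf M-\mathbf I)$. Then $\mathbf M^{(h)}$ has characteristic triple $(\mu_h,\widetilde{\mathbf w},\widetilde{\mathbf z})$ with $\mu_h:=1-h(1-\mu)$; in particular $\mathbf M$ and $\mathbf M^{(h)}$ share their characteristic eigenvectors. Moreover, $\mathbf M^{(h)}$ is micro-reversible if and only if $\mathbf M$ is. Finally, if $k=2$ and $\mathbf M$ is a Kimura matrix with fixation probability $\mathbf F$, then so is $\mathbf M^{(h)}$ (with the same $\mathbf F$).
   Context: Column-stochastic matrices. For $1\le k<N-1$, an $(N+1)\times(N+1)$ column-stochastic $\mathbf M$ is $(N+1,k)$-admissible if, after a simultaneous permutation of rows and columns, $\mathbf M=\begin{pmatrix}\widetilde{\mathbf M}&\mathbf 0\\ \mathbf A&\mathbf I\end{pmatrix}$ with $\mathbf I$ the $k\times k$ identity, $\widetilde{\mathbf M}$ irreducible of size $N+1-k$ (the core) and $\mathbf A$ with no zero row. The characteristic triple $(\mu,\widetilde{\mathbf w},\widetilde{\mathbf z})$ is $\mu=\rho(\widetilde{\mathbf M})\in(0,1)$ together with the positive left/right eigenvectors $\widetilde{\mathbf w},\widetilde{\mathbf z}$ of the core for $\mu$, normalised by $\langle\widetilde{\mathbf w},\mathbf 1\rangle=\langle\widetilde{\mathbf w},\widetilde{\mathbf z}\rangle=1$. $\mathbf M$ is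 micro-reversible if $\widetilde w_i\widetilde M_{ij}\widetilde z_j=\widetilde w_j\widetilde M_{ji}\widetilde z_i$ for all $i,j$. An $(N+1,2)$-admissible matrix is called a Kimura matrix; labelling states $0,\dots,N$ with absorbing states $0$ and $N$, its fixation probability is the unique vector $\mathbf F$ with $\mathbf F^\dagger\mathbf M=\mathbf F^\dagger$, $F_0=0$, $F_N=1$. *)

theory Defs
  imports "Jordan_Normal_Form.Spectral_Radius"
begin

text \<open>An (N+1)x(N+1) real matrix is a function M :: nat => nat => real,
  M i j being the entry in row i, column j, with states (indices) 0..N; entries
  outside this range are irrelevant. Column-stochastic means: nonnegative entries and
  every column sums to 1. A simultaneous permutation of rows and columns bringing M into
  the admissible block form is encoded by the set K of states put into the last k
  positions (the absorbing states); T = {0..N} - K are the core (transient) states.\<close>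

definition col_stochastic :: "nat \<Rightarrow> (nat \<Rightarrow> nat \<Rightarrow> real) \<Rightarrow> bool" where
  "col_stochastic N M \<longleftrightarrow>
     (\<forall>i\<le>N. \<forall>j\<le>N. 0 \<le> M i j) \<and> (\<forall>j\<le>N. (\<Sum>i\<le>N. M i j) = 1)"

definition core_states :: "nat \<Rightarrow> nat set \<Rightarrow> nat set" where
  "core_states N K = {..N} - K"

definition irreducible_on :: "nat set \<Rightarrow> (nat \<Rightarrow> nat \<Rightarrow> real) \<Rightarrow> bool" where
  "irreducible_on T M \<longleftrightarrow>
     (\<forall>i\<in>T. \<forall>j\<in>T. (i, j) \<in> {(a, b). a \<in> T \<and> b \<in> T \<and> 0 < M a b}\<^sup>+)"

definition admissible_with :: "nat \<Rightarrow> nat \<Rightarrow> nat set \<Rightarrow> (nat \<Rightarrow> nat \<Rightarrow> real) \<Rightarrow> bool" where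
  "admissible_with N k K M \<longleftrightarrow>
     1 \<le> k \<and> k < N - 1 \<and>
     col_stochastic N M \<and>
     K \<subseteq> {..N} \<and> card K = k \<and>
     (\<forall>j\<in>K. \<forall>i\<le>N. M i j = (if i = j then 1 else 0)) \<and>
     irreducible_on (core_states N K) M \<and>
     (\<forall>i\<in>K. \<exists>j\<in>core_states N K. M i j \<noteq> 0)"

definition admissible :: "nat \<Rightarrow> nat \<Rightarrow> (nat \<Rightarrow> nat \<Rightarrow> real) \<Rightarrow> bool" where
  "admissible N k M \<longleftrightarrow> (\<exists>K. admissible_with N k K M)"

definition core_mat :: "nat set \<Rightarrow> (nat \<Rightarrow> nat \<Rightarrow> real) \<Rightarrow> complex mat" where
  "core_mat T M = (let xs = sorted_list_of_set T in
     mat (card T) (card T) (\<lambda>(a, b). complex_of_real (M (xs ! a) (xs ! b))))"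

definition char_triple ::
  "nat \<Rightarrow> nat set \<Rightarrow> (nat \<Rightarrow> nat \<Rightarrow> real) \<Rightarrow> real \<Rightarrow> (nat \<Rightarrow> real) \<Rightarrow> (nat \<Rightarrow> real) \<Rightarrow> bool" where
  "char_triple N K M \<mu> w z \<longleftrightarrow>
     (let T = core_states N K in
       \<mu> = spectral_radius (core_mat T M) \<and> 0 < \<mu> \<and> \<mu> < 1 \<and>
       (\<forall>i\<in>T. 0 < w i \<and> 0 < z i) \<and>
       (\<forall>j\<in>T. (\<Sum>i\<in>T. w i * M i j) = \<mu> * w j) \<and>
       (\<forall>i\<in>T. (\<Sum>j\<in>T. M i j * z j) = \<mu> * z i) \<and>
       (\<Sum>i\<in>T. w i) = 1 \<and> (\<Sum>i\<in>T. w i * z i) = 1)"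

definition micro_reversible ::
  "nat \<Rightarrow> nat set \<Rightarrow> (nat \<Rightarrow> nat \<Rightarrow> real) \<Rightarrow> (nat \<Rightarrow> real) \<Rightarrow> (nat \<Rightarrow> real) \<Rightarrow> bool" where
  "micro_reversible N K M w z \<longleftrightarrow>
     (\<forall>i\<in>core_states N K. \<forall>j\<in>core_states N K. w i * M i j * z j = w j * M j i * z i)"

definition kimura :: "nat \<Rightarrow> (nat \<Rightarrow> nat \<Rightarrow> real) \<Rightarrow> bool" where
  "kimura N M \<longleftrightarrow> admissible_with N 2 {0, N} M"

definition fixation_eqs :: "nat \<Rightarrow> (nat \<Rightarrow> nat \<Rightarrow> real) \<Rightarrow> (nat \<Rightarrow> real) \<Rightarrow> bool" where
  "fixation_eqs N M F \<longleftrightarrow>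
     F 0 = 0 \<and> F N = 1 \<and> (\<forall>j\<le>N. (\<Sum>i\<le>N. F i * M i j) = F j)"

definition fixation_probability :: "nat \<Rightarrow> (nat \<Rightarrow> nat \<Rightarrow> real) \<Rightarrow> (nat \<Rightarrow> real) \<Rightarrow> bool" where
  "fixation_probability N M F \<longleftrightarrow>
     fixation_eqs N M F \<and> (\<forall>G. fixation_eqs N M G \<longrightarrow> (\<forall>i\<le>N. G i = F i))"

definition lazy_mat :: "real \<Rightarrow> (nat \<Rightarrow> nat \<Rightarrow> real) \<Rightarrow> nat \<Rightarrow> nat \<Rightarrow> real" where
  "lazy_mat h M i j = (if i = j then 1 else 0) + h * (M i j - (if i = j then 1 else 0))"

end

theory Submission
  imports Defs
begin


lemma lazy_alt: "lazy_mat h M i j = (if i = j then 1 - h + h * M i j else h * M i j)"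
  unfolding lazy_mat_def by (auto simp: algebra_simps)

lemma sum_lazy_left:
  assumes "finite A" "j \<in> A"
  shows "(\<Sum>i\<in>A. f i * lazy_mat h M i j) = (1-h)*f j + h*(\<Sum>i\<in>A. f i * M i j)"
proof -
  have "(\<Sum>i\<in>A. f i * lazy_mat h M i j) = (\<Sum>i\<in>A. (1-h) * (if i = j then f i else 0) + h * (f i * M i j))"
    by (rule sum.cong) (auto simp: lazy_mat_def algebra_simps)
  also have "\<dots> = (1-h)*f j + h*(\<Sum>i\<in>A. f i * M i j)"
    using assms by (simp add: sum.distrib sum_distrib_left[symmetric])
  finally show ?thesis .
qed

lemma sum_lazy_right:
  assumes "finite A" "i \<in> A"
  shows "(\<Sum>j\<in>A. lazy_mat h M i j * f j) = (1-h)*f i + h*(\<Sum>j\<in>A. M i j * f j)"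
proof -
  have "(\<Sum>j\<in>A. lazy_mat h M i j * f j) = (\<Sum>j\<in>A. (1-h) * (if i = j then f j else 0) + h * (M i j * f j))"
    by (rule sum.cong) (auto simp: lazy_mat_def algebra_simps)
  also have "\<dots> = (1-h)*f i + h*(\<Sum>j\<in>A. M i j * f j)"
    using assms by (simp add: sum.distrib sum_distrib_left[symmetric])
  finally show ?thesis .
qed

lemma admissible_lazy:
  assumes adm: "admissible_with N k K M" and h: "0 < h" "h \<le> 1"
  shows "admissible_with N k K (lazy_mat h M)"
proof -
  have cs: "col_stochastic N M" using adm unfolding admissible_with_def by auto
  have cs': "col_stochastic N (lazy_mat h M)"
    unfolding col_stochastic_def
  proof (intro conjI allI impI)
    fix i j assume "i \<le> N" "j \<le> N"
    then have "0 \<le> M i j" using cs unfolding col_stochastic_def by auto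
    then show "0 \<le> lazy_mat h M i j" using h unfolding lazy_alt
      by (auto intro: add_nonneg_nonneg)
  next
    fix j assume j: "j \<le> N"
    have "(\<Sum>i\<le>N. lazy_mat h M i j) = (\<Sum>i\<le>N. 1 * lazy_mat h M i j)" by simp
    also have "\<dots> = (1-h) + h * (\<Sum>i\<le>N. M i j)"
      using sum_lazy_left[of "{..N}" j "\<lambda>_. 1" h M] j by simp
    also have "\<dots> = 1" using cs j unfolding col_stochastic_def by auto
    finally show "(\<Sum>i\<le>N. lazy_mat h M i j) = 1" .
  qed
  have sub: "{(a, b). a \<in> T \<and> b \<in> T \<and> 0 < M a b} \<subseteq> {(a, b). a \<in> T \<and> b \<in> T \<and> 0 < lazy_mat h M a b}"
    if "T \<subseteq> {..N}" for T
  proof safe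
    fix a b assume ab: "a \<in> T" "b \<in> T" "0 < M a b"
    have "M a b \<le> 1 \<or> True" by simp
    show "0 < lazy_mat h M a b" using ab h unfolding lazy_alt
      by (auto intro: add_nonneg_pos)
  qed
  have irr: "irreducible_on (core_states N K) (lazy_mat h M)"
    using adm trancl_mono[OF _ sub[of "core_states N K"]]
    unfolding admissible_with_def irreducible_on_def core_states_def by blast
  show ?thesis
    using adm cs' irr h unfolding admissible_with_def core_states_def
    by (auto simp: lazy_alt) (metis DiffD2)
qed

lemma core_mat_lazy_mult:
  assumes T: "finite T" and v: "v \<in> carrier_vec (card T)"
  shows "core_mat T (lazy_mat h M) *\<^sub>v v =
     complex_of_real (1-h) \<cdot>\<^sub>v v + complex_of_real h \<cdot>\<^sub>v (core_mat T M *\<^sub>v v)"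
proof (rule eq_vecI)
  let ?xs = "sorted_list_of_set T"
  have d: "distinct ?xs" "length ?xs = card T" using T by auto
  show "dim_vec (core_mat T (lazy_mat h M) *\<^sub>v v) =
    dim_vec (complex_of_real (1-h) \<cdot>\<^sub>v v + complex_of_real h \<cdot>\<^sub>v (core_mat T M *\<^sub>v v))"
    using v by (simp add: core_mat_def Let_def)
  fix i assume i: "i < dim_vec (complex_of_real (1-h) \<cdot>\<^sub>v v + complex_of_real h \<cdot>\<^sub>v (core_mat T M *\<^sub>v v))"
  then have i: "i < card T" using v by (simp add: core_mat_def Let_def)
  have eq: "?xs ! i = ?xs ! j \<longleftrightarrow> i = j" if "j < card T" for j
    using d i that nth_eq_iff_index_eq by metis
  have "(core_mat T (lazy_mat h M) *\<^sub>v v) $ i =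
     (\<Sum>j<card T. complex_of_real (lazy_mat h M (?xs ! i) (?xs ! j)) * v $ j)"
    using i v by (simp add: core_mat_def Let_def scalar_prod_def lessThan_atLeast0)
  also have "\<dots> = (\<Sum>j<card T. complex_of_real (1-h) * (if i = j then v $ j else 0)
       + complex_of_real h * (complex_of_real (M (?xs ! i) (?xs ! j)) * v $ j))"
    by (rule sum.cong) (auto simp: lazy_alt eq algebra_simps)
  also have "\<dots> = complex_of_real (1-h) * v $ i + complex_of_real h *
      (\<Sum>j<card T. complex_of_real (M (?xs ! i) (?xs ! j)) * v $ j)"
    using i by (simp add: sum.distrib sum_distrib_left[symmetric])
  also have "\<dots> = (complex_of_real (1-h) \<cdot>\<^sub>v v + complex_of_real h \<cdot>\<^sub>v (core_mat T M *\<^sub>v v)) $ i"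
    using i v by (simp add: core_mat_def Let_def scalar_prod_def lessThan_atLeast0)
  finally show "(core_mat T (lazy_mat h M) *\<^sub>v v) $ i =
    (complex_of_real (1-h) \<cdot>\<^sub>v v + complex_of_real h \<cdot>\<^sub>v (core_mat T M *\<^sub>v v)) $ i" .
qed

lemma dim_core_mat[simp]: "dim_row (core_mat T M) = card T" "dim_col (core_mat T M) = card T"
  by (auto simp: core_mat_def Let_def)

lemma eig_lazy1:
  assumes T: "finite T" and e: "eigenvector (core_mat T M) v l"
  shows "eigenvector (core_mat T (lazy_mat h M)) v (complex_of_real (1-h) + complex_of_real h * l)"
proof -
  have v: "v \<in> carrier_vec (card T)" "v \<noteq> 0\<^sub>v (card T)" and Cv: "core_mat T M *\<^sub>v v = l \<cdot>\<^sub>v v"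
    using e unfolding eigenvector_def by auto
  have "core_mat T (lazy_mat h M) *\<^sub>v v = (complex_of_real (1-h) + complex_of_real h * l) \<cdot>\<^sub>v v"
    unfolding core_mat_lazy_mult[OF T v(1)] Cv
    by (rule eq_vecI) (use v in \<open>auto simp: algebra_simps\<close>)
  then show ?thesis using v unfolding eigenvector_def by auto
qed

lemma eig_lazy2:
  assumes T: "finite T" and e: "eigenvector (core_mat T (lazy_mat h M)) v l" and h: "h \<noteq> 0"
  shows "eigenvector (core_mat T M) v ((l - complex_of_real (1-h)) / complex_of_real h)"
proof -
  have v: "v \<in> carrier_vec (card T)" "v \<noteq> 0\<^sub>v (card T)" and Cv: "core_mat T (lazy_mat h M) *\<^sub>v v = l \<cdot>\<^sub>v v"
    using e unfolding eigenvector_def by auto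
  have eq: "complex_of_real (1-h) \<cdot>\<^sub>v v + complex_of_real h \<cdot>\<^sub>v (core_mat T M *\<^sub>v v) = l \<cdot>\<^sub>v v"
    using Cv core_mat_lazy_mult[OF T v(1), of h M] by simp
  have "core_mat T M *\<^sub>v v = ((l - complex_of_real (1-h)) / complex_of_real h) \<cdot>\<^sub>v v"
  proof (rule eq_vecI)
    fix i assume "i < dim_vec (((l - complex_of_real (1-h)) / complex_of_real h) \<cdot>\<^sub>v v)"
    then have i: "i < card T" using v by simp
    have "(complex_of_real (1-h) \<cdot>\<^sub>v v + complex_of_real h \<cdot>\<^sub>v (core_mat T M *\<^sub>v v)) $ i = (l \<cdot>\<^sub>v v) $ i"
      using eq by simp
    then have "complex_of_real (1-h) * v $ i + complex_of_real h * (core_mat T M *\<^sub>v v) $ i = l * v $ i"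
      using i v by simp
    then show "(core_mat T M *\<^sub>v v) $ i = (((l - complex_of_real (1-h)) / complex_of_real h) \<cdot>\<^sub>v v) $ i"
      using i v h by (simp add: field_simps)
  qed (use v in auto)
  then show ?thesis using v unfolding eigenvector_def by auto
qed

lemma sum_T_nth:
  assumes T: "finite T"
  shows "(\<Sum>b<card T. f (sorted_list_of_set T ! b)) = (\<Sum>j\<in>T. f j)"
proof -
  let ?xs = "sorted_list_of_set T"
  have d: "distinct ?xs" "length ?xs = card T" "set ?xs = T" using T by auto
  have inj: "inj_on (nth ?xs) {..<card T}" using d by (simp add: inj_on_nth)
  have img: "nth ?xs ` {..<card T} = T" using nth_image[of "card T" ?xs] d by (simp add: lessThan_atLeast0)
  show ?thesis using sum.reindex[OF inj, of f] img by simp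
qed

lemma z_eigen:
  assumes T: "finite T" "T \<noteq> {}"
    and zpos: "\<forall>i\<in>T. 0 < z i"
    and ev: "\<forall>i\<in>T. (\<Sum>j\<in>T. M i j * z j) = \<mu> * z i"
  shows "eigenvector (core_mat T M) (vec (card T) (\<lambda>a. complex_of_real (z (sorted_list_of_set T ! a)))) (complex_of_real \<mu>)"
proof -
  let ?xs = "sorted_list_of_set T"
  let ?v = "vec (card T) (\<lambda>a. complex_of_real (z (?xs ! a)))"
  have d: "distinct ?xs" "length ?xs = card T" "set ?xs = T" using T by auto
  have n: "0 < card T" using T by (simp add: card_gt_0_iff)
  have x0: "?xs ! 0 \<in> T" using d n by (metis nth_mem)
  have nz: "?v \<noteq> 0\<^sub>v (card T)"
  proof
    assume "?v = 0\<^sub>v (card T)"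
    then have "?v $ 0 = 0" using n by simp
    moreover have "0 < z (?xs ! 0)" using zpos x0 by blast
    ultimately show False using n by simp
  qed
  have "core_mat T M *\<^sub>v ?v = complex_of_real \<mu> \<cdot>\<^sub>v ?v"
  proof (rule eq_vecI)
    fix a assume "a < dim_vec (complex_of_real \<mu> \<cdot>\<^sub>v ?v)"
    then have a: "a < card T" by simp
    have xa: "?xs ! a \<in> T" using d a by (metis nth_mem)
    have "(core_mat T M *\<^sub>v ?v) $ a = (\<Sum>b<card T. complex_of_real (M (?xs ! a) (?xs ! b) * z (?xs ! b)))"
      using a by (simp add: core_mat_def Let_def scalar_prod_def lessThan_atLeast0)
    also have "\<dots> = complex_of_real (\<Sum>j\<in>T. M (?xs ! a) j * z j)"
      using sum_T_nth[OF T(1), of "\<lambda>j. complex_of_real (M (?xs ! a) j * z j)"] by simp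
    also have "\<dots> = (complex_of_real \<mu> \<cdot>\<^sub>v ?v) $ a" using ev xa a by simp
    finally show "(core_mat T M *\<^sub>v ?v) $ a = (complex_of_real \<mu> \<cdot>\<^sub>v ?v) $ a" .
  qed simp
  then show ?thesis using nz unfolding eigenvector_def by simp
qed

lemma sr_lazy:
  assumes T: "finite T" "T \<noteq> {}"
    and e: "eigenvector (core_mat T M) v (complex_of_real \<mu>)"
    and mu: "\<mu> = spectral_radius (core_mat T M)"
    and h: "0 < h" "h \<le> 1"
  shows "spectral_radius (core_mat T (lazy_mat h M)) = 1 - h * (1 - \<mu>)"
proof -
  have n: "0 < card T" using card_gt_0_iff[of T] T(1) T(2) by simp
  have C: "core_mat T M \<in> carrier_mat (card T) (card T)"
    unfolding carrier_mat_def mem_Collect_eq by (intro conjI dim_core_mat)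
  have C': "core_mat T (lazy_mat h M) \<in> carrier_mat (card T) (card T)"
    unfolding carrier_mat_def mem_Collect_eq by (intro conjI dim_core_mat)
  note m = spectral_radius_mem_max[OF C n] 
  note m' = spectral_radius_mem_max[OF C' n]
  obtain l1 where "spectral_radius (core_mat T M) = norm l1" "l1 \<in> spectrum (core_mat T M)"
    by (rule imageE[OF m(1)])
  then have mu0: "0 \<le> \<mu>" unfolding mu by (simp only: norm_ge_zero)
  obtain l where sr: "spectral_radius (core_mat T (lazy_mat h M)) = norm l"
    and l: "l \<in> spectrum (core_mat T (lazy_mat h M))"
    by (rule imageE[OF m'(1)])
  from l obtain u where u: "eigenvector (core_mat T (lazy_mat h M)) u l"
    unfolding spectrum_def eigenvalue_def by blast
  define l0 where "l0 = (l - complex_of_real (1-h)) / complex_of_real h"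
  have hne: "h \<noteq> 0" using h by simp
  have "eigenvector (core_mat T M) u l0"
    unfolding l0_def by (rule eig_lazy2[OF T(1) u hne])
  then have "l0 \<in> spectrum (core_mat T M)"
    unfolding spectrum_def eigenvalue_def by blast
  then have "norm l0 \<in> norm ` spectrum (core_mat T M)" by (rule imageI)
  then have nl0: "norm l0 \<le> \<mu>" using m(2) mu by blast
  have hc: "complex_of_real h \<noteq> 0" using hne by simp
  have leq: "l = complex_of_real (1-h) + complex_of_real h * l0"
    unfolding l0_def using hc by simp
  have "norm l \<le> norm (complex_of_real (1-h)) + norm (complex_of_real h * l0)"
    unfolding leq by (rule norm_triangle_ineq)
  also have "\<dots> = \<bar>1-h\<bar> + \<bar>h\<bar> * norm l0" by (simp only: norm_mult norm_of_real)
  also have "\<dots> = (1-h) + h * norm l0" using h by simp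
  also have "\<dots> \<le> (1-h) + h * \<mu>" using nl0 h by (simp add: mult_left_mono)
  finally have le1: "spectral_radius (core_mat T (lazy_mat h M)) \<le> 1 - h * (1 - \<mu>)"
    using sr by (simp add: algebra_simps)
  have "eigenvector (core_mat T (lazy_mat h M)) v (complex_of_real (1-h) + complex_of_real h * complex_of_real \<mu>)"
    by (rule eig_lazy1[OF T(1) e])
  moreover have ceq: "complex_of_real (1-h) + complex_of_real h * complex_of_real \<mu> = complex_of_real (1 - h * (1 - \<mu>))"
    by (simp add: algebra_simps)
  ultimately have "eigenvector (core_mat T (lazy_mat h M)) v (complex_of_real (1 - h * (1 - \<mu>)))"
    by (simp only:)
  then have "complex_of_real (1 - h * (1 - \<mu>)) \<in> spectrum (core_mat T (lazy_mat h M))"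
    unfolding spectrum_def eigenvalue_def by blast
  then have "norm (complex_of_real (1 - h * (1 - \<mu>))) \<in> norm ` spectrum (core_mat T (lazy_mat h M))"
    by (rule imageI)
  then have ge: "norm (complex_of_real (1 - h * (1 - \<mu>))) \<le> spectral_radius (core_mat T (lazy_mat h M))"
    using m'(2) by blast
  have "0 \<le> (1 - h) + h * \<mu>" using h mu0 by simp
  then have "0 \<le> 1 - h * (1 - \<mu>)" by (simp add: algebra_simps)
  then have "norm (complex_of_real (1 - h * (1 - \<mu>))) = 1 - h * (1 - \<mu>)"
    by (simp only: norm_of_real abs_of_nonneg)
  then show ?thesis using le1 ge by simp
qed

lemma fix_lazy:
  assumes h: "h \<noteq> 0"
  shows "fixation_eqs N (lazy_mat h M) G \<longleftrightarrow> fixation_eqs N M G"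
proof -
  have "(\<Sum>i\<le>N. G i * lazy_mat h M i j) = G j \<longleftrightarrow> (\<Sum>i\<le>N. G i * M i j) = G j" if j: "j \<le> N" for j
  proof -
    define X where "X = (\<Sum>i\<le>N. G i * M i j)"
    have "(\<Sum>i\<le>N. G i * lazy_mat h M i j) = (1-h) * G j + h * X"
      using sum_lazy_left[of "{..N}" j G h M] j unfolding X_def by simp
    also have "\<dots> = G j + h * (X - G j)" by (simp add: algebra_simps)
    finally have e: "(\<Sum>i\<le>N. G i * lazy_mat h M i j) = G j + h * (X - G j)" .
    have "h * (X - G j) = 0 \<longleftrightarrow> X = G j" using h by simp
    then show ?thesis unfolding e X_def[symmetric] by linarith
  qed
  then show ?thesis unfolding fixation_eqs_def by auto
qed

theorem lemma8:
  fixes N k :: nat and K :: "nat set" and M :: "nat \<Rightarrow> nat \<Rightarrow> real"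
    and \<mu> h :: real and w z :: "nat \<Rightarrow> real"
  assumes adm: "admissible_with N k K M"
    and triple: "char_triple N K M \<mu> w z"
    and h: "0 < h" "h \<le> 1"
  shows "admissible_with N k K (lazy_mat h M)
         \<and> char_triple N K (lazy_mat h M) (1 - h * (1 - \<mu>)) w z
         \<and> (micro_reversible N K (lazy_mat h M) w z \<longleftrightarrow> micro_reversible N K M w z)
         \<and> (\<forall>F. k = 2 \<and> kimura N M \<and> fixation_probability N M F \<longrightarrow>
                kimura N (lazy_mat h M) \<and> fixation_probability N (lazy_mat h M) F)"
proof (intro conjI)
  show adm': "admissible_with N k K (lazy_mat h M)" using admissible_lazy[OF adm h] .
  define T where "T = core_states N K"
  have finT: "finite T" unfolding T_def core_states_def by simp
  have Tne: "T \<noteq> {}"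
  proof
    assume "T = {}"
    then have "{..N} \<subseteq> K" unfolding T_def core_states_def by auto
    then have "card {..N} \<le> card K" using adm unfolding admissible_with_def
      by (meson card_mono finite_atMost finite_subset)
    moreover have "card K = k" "k < N - 1" using adm unfolding admissible_with_def by auto
    ultimately show False by simp
  qed
  have tr: "\<mu> = spectral_radius (core_mat T M)" "0 < \<mu>" "\<mu> < 1"
       "\<forall>i\<in>T. 0 < w i \<and> 0 < z i"
       "\<forall>j\<in>T. (\<Sum>i\<in>T. w i * M i j) = \<mu> * w j"
       "\<forall>i\<in>T. (\<Sum>j\<in>T. M i j * z j) = \<mu> * z i"
       "(\<Sum>i\<in>T. w i) = 1" "(\<Sum>i\<in>T. w i * z i) = 1"
    using triple unfolding char_triple_def Let_def T_def by auto
  have e: "eigenvector (core_mat T M) (vec (card T) (\<lambda>a. complex_of_real (z (sorted_list_of_set T ! a)))) (complex_of_real \<mu>)"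
    using z_eigen[OF finT Tne, of z M \<mu>] tr by auto
  have sr: "spectral_radius (core_mat T (lazy_mat h M)) = 1 - h * (1 - \<mu>)"
    using sr_lazy[OF finT Tne e tr(1) h] .
  have p1: "0 < 1 - h * (1 - \<mu>)"
  proof -
    have "0 < (1 - h) + h * \<mu>" using h tr by (simp add: add_nonneg_pos)
    then show ?thesis by (simp add: algebra_simps)
  qed
  have p2: "1 - h * (1 - \<mu>) < 1" using h tr by simp
  have l: "\<forall>j\<in>T. (\<Sum>i\<in>T. w i * lazy_mat h M i j) = (1 - h * (1 - \<mu>)) * w j"
  proof
    fix j assume j: "j \<in> T"
    show "(\<Sum>i\<in>T. w i * lazy_mat h M i j) = (1 - h * (1 - \<mu>)) * w j"
      using sum_lazy_left[OF finT j, of w h M] tr(5) j by (simp add: algebra_simps)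
  qed
  have r: "\<forall>i\<in>T. (\<Sum>j\<in>T. lazy_mat h M i j * z j) = (1 - h * (1 - \<mu>)) * z i"
  proof
    fix i assume i: "i \<in> T"
    show "(\<Sum>j\<in>T. lazy_mat h M i j * z j) = (1 - h * (1 - \<mu>)) * z i"
      using sum_lazy_right[OF finT i, of h M z] tr(6) i by (simp add: algebra_simps)
  qed
  show "char_triple N K (lazy_mat h M) (1 - h * (1 - \<mu>)) w z"
    unfolding char_triple_def Let_def T_def[symmetric]
    using sr p1 p2 l r tr by auto
  show "micro_reversible N K (lazy_mat h M) w z \<longleftrightarrow> micro_reversible N K M w z"
  proof -
    have "w i * lazy_mat h M i j * z j = w j * lazy_mat h M j i * z i \<longleftrightarrow>
          w i * M i j * z j = w j * M j i * z i" for i j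
    proof (cases "i = j")
      case True then show ?thesis by simp
    next
      case False
      then have eqs: "w i * lazy_mat h M i j * z j = h * (w i * M i j * z j)"
        "w j * lazy_mat h M j i * z i = h * (w j * M j i * z i)"
        by (auto simp: lazy_alt)
      have "h \<noteq> 0" using h by simp
      then show ?thesis unfolding eqs by simp
    qed
    then show ?thesis unfolding micro_reversible_def by simp
  qed
  show "\<forall>F. k = 2 \<and> kimura N M \<and> fixation_probability N M F \<longrightarrow>
                kimura N (lazy_mat h M) \<and> fixation_probability N (lazy_mat h M) F"
  proof (intro allI impI conjI)
    fix F assume a: "k = 2 \<and> kimura N M \<and> fixation_probability N M F"
    show "kimura N (lazy_mat h M)" using a admissible_lazy[OF _ h] unfolding kimura_def by blast
    show "fixation_probability N (lazy_mat h M) F"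
      using a fix_lazy[of h N M] h unfolding fixation_probability_def by simp
  qed
qed

end
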